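(* Let $A = A_s + A_i\epsilon\in\mathbb{DR}^{m\times n}$ with $A_s\in\mathbb{R}^{m\times n}$ of full column rank, and let $A = (Q_s + Q_i\epsilon)(R_s + R_i\epsilon)$ be a thin QR decomposition of $A$, i.e. $Q = Q_s+Q_i\epsilon\in\mathbb{DR}^{m\times n}$ satisfies $Q^{\top}Q = I_n$ and $R = R_s+R_i\epsilon\in\mathbb{DR}^{n\times n}$ is upper triangular with $R_s$ having positive diagonal entries. Then the dual Moore–Penrose generalized inverse of $A$ exists and equals $$A^{\dagger} = R_s^{-1}Q_s^{\top} + \big(R_s^{-1}Q_i^{\top} - R_s^{-1}R_iR_s^{-1}Q_s^{\top}\big)\epsilon.$$
   Context: A dual number is $a = a_s + a_i\epsilon$ with $a_s,a_i\in\mathbb{R}$, where $\epsilon^2=0$, $\epsilon\neq 0$; $\mathbb{DR}^{m\times n}$ denotes the set of dual matrices $A = A_s + A_i\epsilon$ with $A_s, A_i\in\mathbb{R}^{m\times n}$. Products use $\epsilon^2=0$: $(A_s+A_i\epsilon)(B_s+B_i\epsilon) = A_sB_s + (A_sB_i + A_iB_s)\epsilon$; transpose is $A^{\top}=A_s^{\top}+A_i^{\top}\epsilon$. A dual matrix is upper triangular if both parts are. The dual Moore–Penrose generalized inverse (DMPGI) of $A\in\mathbb{DR}^{m\times n}$ is a dual matrix $X\in\mathbb{DR}^{n\times m}$ satisfying $AXA = A$, $XAX = X$, $(AX)^{\top} = AX$, $(XA)^{\top} = XA$; it is denoted $A^{\dagger}$. *)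

theory Defs
  imports "HOL-Analysis.Analysis"
begin

text \<open>A dual matrix A = A_s + A_i eps is represented as the pair (A_s, A_i) of real matrices.
  Dimensions are index types: an m x n matrix is real^'n^'m.\<close>

type_synonym ('n, 'm) dmat = "(real^'n^'m) \<times> (real^'n^'m)"

definition dmult :: "('k::finite, 'm::finite) dmat \<Rightarrow> ('n::finite, 'k) dmat \<Rightarrow> ('n, 'm) dmat" where
  "dmult A B = (fst A ** fst B, fst A ** snd B + snd A ** fst B)"

definition dtranspose :: "('n::finite, 'm::finite) dmat \<Rightarrow> ('m, 'n) dmat" where
  "dtranspose A = (transpose (fst A), transpose (snd A))"

definition dident :: "('n::finite, 'n::finite) dmat" where
  "dident = (mat 1, 0)"

definition upper_tri :: "real^'n::{finite,wellorder}^'n::{finite,wellorder} \<Rightarrow> bool" where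
  "upper_tri M \<longleftrightarrow> (\<forall>i j. j < i \<longrightarrow> M $ i $ j = 0)"

definition dupper_tri :: "('n::{finite,wellorder}, 'n::{finite,wellorder}) dmat \<Rightarrow> bool" where
  "dupper_tri R \<longleftrightarrow> upper_tri (fst R) \<and> upper_tri (snd R)"

definition is_DMPGI :: "('n::finite, 'm::finite) dmat \<Rightarrow> ('m, 'n) dmat \<Rightarrow> bool" where
  "is_DMPGI A X \<longleftrightarrow>
     dmult (dmult A X) A = A \<and> dmult (dmult X A) X = X \<and>
     dtranspose (dmult A X) = dmult A X \<and> dtranspose (dmult X A) = dmult X A"

end

theory Submission
  imports Defs
begin

lemma mm_diff_l: "(A::real^'n^'m) ** (B - C) = A ** B - A ** C"
  by (simp add: matrix_matrix_mult_def vec_eq_iff sum_subtractf right_diff_distrib)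

lemma mm_diff_r: "((B::real^'n^'m) - C) ** A = B ** A - C ** A"
  by (simp add: matrix_matrix_mult_def vec_eq_iff sum_subtractf left_diff_distrib)

lemma transpose_diff: "transpose ((A::real^'n^'m) - B) = transpose A - transpose B"
  by (simp add: transpose_def vec_eq_iff)

lemma transpose_add: "transpose ((A::real^'n^'m) + B) = transpose A + transpose B"
  by (simp add: transpose_def vec_eq_iff)

lemma mm_add_r: "((B::real^'n^'m) + C) ** A = B ** A + C ** A"
  by (simp add: matrix_matrix_mult_def vec_eq_iff sum.distrib distrib_right)

lemma dmult_assoc: "dmult (dmult (A::('k::finite,'m::finite) dmat) (B::('l::finite,'k) dmat)) (C::('n::finite,'l) dmat)
   = dmult A (dmult B C)"
  by (simp add: dmult_def matrix_mul_assoc matrix_add_ldistrib mm_add_r add_ac)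

lemma dtrans_mult: "dtranspose (dmult (A::('k::finite,'m::finite) dmat) (B::('n::finite,'k) dmat))
   = dmult (dtranspose B) (dtranspose A)"
  by (simp add: dmult_def dtranspose_def matrix_transpose_mul transpose_add add_ac)

lemma dtrans_trans[simp]: "dtranspose (dtranspose A) = A"
  by (simp add: dtranspose_def)

lemma DMPGI_unique:
  assumes X: "is_DMPGI A X" and Y: "is_DMPGI A Y"
  shows "X = Y"
proof -
  have x1: "dmult A (dmult X A) = A" and x2: "dmult X (dmult A X) = X"
   and x3: "dmult (dtranspose X) (dtranspose A) = dmult A X"
   and x4: "dmult (dtranspose A) (dtranspose X) = dmult X A"
    using X by (auto simp: is_DMPGI_def dmult_assoc dtrans_mult)
  have y1: "dmult A (dmult Y A) = A" and y2: "dmult Y (dmult A Y) = Y"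
   and y3: "dmult (dtranspose Y) (dtranspose A) = dmult A Y"
   and y4: "dmult (dtranspose A) (dtranspose Y) = dmult Y A"
    using Y by (auto simp: is_DMPGI_def dmult_assoc dtrans_mult)
  have tA: "dtranspose A = dmult (dtranspose A) (dmult (dtranspose Y) (dtranspose A))"
    by (metis y1 dtrans_mult dmult_assoc)
  have tA': "dtranspose A = dmult (dtranspose A) (dmult (dtranspose X) (dtranspose A))"
    by (metis x1 dtrans_mult dmult_assoc)
  have "X = dmult X (dmult (dtranspose X) (dtranspose A))" using x2 x3 by simp
  also have "\<dots> = dmult X (dmult (dtranspose X) (dmult (dtranspose A) (dmult (dtranspose Y) (dtranspose A))))"
    using tA by simp
  also have "\<dots> = dmult X (dmult (dmult (dtranspose X) (dtranspose A)) (dmult (dtranspose Y) (dtranspose A)))"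
    by (simp add: dmult_assoc)
  also have "\<dots> = dmult (dmult X (dmult A X)) (dmult A Y)" by (simp add: x3 y3 dmult_assoc)
  also have "\<dots> = dmult X (dmult A Y)" using x2 by simp
  finally have eX: "X = dmult X (dmult A Y)" .
  have "Y = dmult (dmult (dtranspose A) (dtranspose Y)) Y" using y2 y4 by (simp add: dmult_assoc)
  also have "\<dots> = dmult (dmult (dmult (dtranspose A) (dmult (dtranspose X) (dtranspose A))) (dtranspose Y)) Y"
    using tA' by simp
  also have "\<dots> = dmult (dmult (dtranspose A) (dtranspose X)) (dmult (dmult (dtranspose A) (dtranspose Y)) Y)"
    by (simp add: dmult_assoc)
  also have "\<dots> = dmult (dmult X A) (dmult (dmult Y A) Y)" by (simp add: x4 y4)
  also have "\<dots> = dmult X (dmult A Y)" using y2 by (simp add: dmult_assoc)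
  finally show ?thesis using eX by simp
qed

lemma mm_neg_l: "(- (B::real^'n^'m)) ** A = - (B ** A)"
  by (simp add: matrix_matrix_mult_def vec_eq_iff sum_negf)

lemma mm_neg_r: "(A::real^'n^'m) ** (- B) = - (A ** B)"
  by (simp add: matrix_matrix_mult_def vec_eq_iff sum_negf)

lemma transpose_zero: "transpose (0::real^'n^'m) = 0"
  by (simp add: transpose_def vec_eq_iff)

lemma transpose_neg: "transpose (- (A::real^'n^'m)) = - transpose A"
  by (simp add: transpose_def vec_eq_iff)

theorem theorem5p1:
  fixes A Q :: "('n::{finite,wellorder}, 'm::finite) dmat"
    and R :: "('n::{finite,wellorder}, 'n::{finite,wellorder}) dmat"
  assumes full_rank: "rank (fst A) = CARD('n)"
    and qr: "A = dmult Q R"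
    and orth: "dmult (dtranspose Q) Q = dident"
    and tri: "dupper_tri R"
    and pos: "\<forall>i. fst R $ i $ i > 0"
  shows "is_DMPGI A
           (matrix_inv (fst R) ** transpose (fst Q),
            matrix_inv (fst R) ** transpose (snd Q)
              - matrix_inv (fst R) ** snd R ** matrix_inv (fst R) ** transpose (fst Q))
       \<and> (\<forall>X. is_DMPGI A X \<longrightarrow>
           X = (matrix_inv (fst R) ** transpose (fst Q),
                matrix_inv (fst R) ** transpose (snd Q)
                  - matrix_inv (fst R) ** snd R ** matrix_inv (fst R) ** transpose (fst Q)))"
proof -
  obtain Qs Qi where Q: "Q = (Qs, Qi)" by (cases Q)
  obtain Rs Ri where R: "R = (Rs, Ri)" by (cases R)
  define S where "S = matrix_inv Rs"
  have As: "fst A = Qs ** Rs" and Ai: "snd A = Qs ** Ri + Qi ** Rs"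
    using qr by (simp_all add: dmult_def Q R)
  have o1: "transpose Qs ** Qs = mat 1" and o2: "transpose Qs ** Qi + transpose Qi ** Qs = 0"
    using orth by (simp_all add: dmult_def dtranspose_def dident_def Q)
  have "det Rs = prod (\<lambda>i. Rs$i$i) UNIV"
    by (rule det_upperdiagonal) (use tri in \<open>auto simp: dupper_tri_def upper_tri_def R\<close>)
  also have "\<dots> > 0" using pos by (simp add: R prod_pos)
  finally have "invertible Rs" by (simp add: invertible_det_nz)
  then have "Rs ** S = mat 1 \<and> S ** Rs = mat 1"
    unfolding S_def matrix_inv_def invertible_def by (rule someI_ex)
  then have r1: "Rs ** S = mat 1" and r2: "S ** Rs = mat 1" by auto
  have k1: "M ** transpose Qs ** Qs = M" for M :: "real^_^'k::finite"
    by (metis o1 matrix_mul_assoc matrix_mul_rid)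
  have k2: "M ** Rs ** S = M" for M :: "real^_^'k::finite"
    by (metis r1 matrix_mul_assoc matrix_mul_rid)
  have k3: "M ** S ** Rs = M" for M :: "real^_^'k::finite"
    by (metis r2 matrix_mul_assoc matrix_mul_rid)
  have k4: "M ** transpose Qi ** Qs = - (M ** transpose Qs ** Qi)" for M :: "real^_^'k::finite"
  proof -
    have "transpose Qi ** Qs = - (transpose Qs ** Qi)" using o2 by (simp add: eq_neg_iff_add_eq_0 add.commute)
    then show ?thesis by (simp add: matrix_mul_assoc[symmetric] mm_neg_r)
  qed
  define X where "X = (S ** transpose Qs, S ** transpose Qi - S ** Ri ** S ** transpose Qs)"
  have XA: "dmult X A = dident"
    apply (simp add: X_def dmult_def dident_def As Ai mm_diff_l mm_diff_r matrix_add_ldistrib mm_add_r matrix_mul_assoc k1 k2 k3 k4 mm_neg_l r2)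
    done
  have AX: "dtranspose (dmult A X) = dmult A X"
    apply (simp add: X_def dmult_def dtranspose_def As Ai mm_diff_l mm_diff_r matrix_add_ldistrib mm_add_r matrix_mul_assoc k1 k2 k3 k4 mm_neg_l r2
       matrix_transpose_mul transpose_add transpose_diff)
    done
  have XX: "is_DMPGI A X"
    unfolding is_DMPGI_def using XA AX
    by (simp add: dmult_assoc) (simp add: dmult_def dident_def dtranspose_def transpose_zero)
  have u: "\<forall>Y. is_DMPGI A Y \<longrightarrow> Y = X"
  proof (intro allI impI)
    fix Y assume "is_DMPGI A Y"
    then show "Y = X" by (rule DMPGI_unique[OF _ XX])
  qed
  have e: "fst R = Rs" "snd R = Ri" "fst Q = Qs" "snd Q = Qi" by (simp_all add: R Q)
  show ?thesis using conjI[OF XX u] unfolding X_def S_def e .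
qed

end
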